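(* Let $\mathbf{L}=L_0+L_1\mathfrak{q}$, where $L_0\in\mathbb{R}^{n\times n}$ is lower triangular and $L_1\in\mathbb{R}^{n\times n}$ is lower triangular with zeros on the diagonal. Let $K_2\in\mathbb{R}^{n\times p}$ and $x_0\in\mathbb{R}^p$. If $L_0$ is invertible, then for any $r\in(0,1)$ the solution $z\in\ell_{2+}^n$ to $$\mathbf{L}\mathbf{L}^*z=(r^0K_2x_0,\ r^1K_2x_0,\ r^2K_2x_0,\ \ldots)$$ satisfies $$K_1z[0]=r^0K_2x_0,\qquad\text{where } K_1=(L_0+L_1r)L_0^\top.$$
   Context: $\ell_{2+}^n$ is the Hilbert space of square-summable sequences $(v[0],v[1],\ldots)$ with $v[k]\in\mathbb{R}^n$ and inner product $\langle x,y\rangle=\sum_k x[k]^\top y[k]$. The forward shift $\mathfrak{q}$ acts by $(\mathfrak{q}v)[k]=v[k+1]$, so $(\mathbf{L}v)[k]=L_0v[k]+L_1v[k+1]$; its adjoint $\mathfrak{q}^*$ acts by $(\mathfrak{q}^*v)[0]=0$, $(\mathfrak{q}^*v)[k]=v[k-1]$ for $k\ge1$, so $\mathbf{L}^*=L_0^\top+L_1^\top\mathfrak{q}^*$. *)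

theory Defs
  imports "HOL-Analysis.Analysis"
begin

definition ell2 :: "(nat \<Rightarrow> real ^ 'n) \<Rightarrow> bool" where
  "ell2 v \<longleftrightarrow> summable (\<lambda>k. (norm (v k))\<^sup>2)"

definition fshift :: "(nat \<Rightarrow> 'a) \<Rightarrow> nat \<Rightarrow> 'a" where
  "fshift v = (\<lambda>k. v (Suc k))"

definition fshift_adj :: "(nat \<Rightarrow> 'a::zero) \<Rightarrow> nat \<Rightarrow> 'a" where
  "fshift_adj v = (\<lambda>k. if k = 0 then 0 else v (k - 1))"

definition Lop :: "real ^ 'n ^ 'n \<Rightarrow> real ^ 'n ^ 'n \<Rightarrow> (nat \<Rightarrow> real ^ 'n) \<Rightarrow> nat \<Rightarrow> real ^ 'n" where
  "Lop L0 L1 v = (\<lambda>k. L0 *v v k + L1 *v fshift v k)"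

definition Lop_adj :: "real ^ 'n ^ 'n \<Rightarrow> real ^ 'n ^ 'n \<Rightarrow> (nat \<Rightarrow> real ^ 'n) \<Rightarrow> nat \<Rightarrow> real ^ 'n" where
  "Lop_adj L0 L1 v = (\<lambda>k. transpose L0 *v v k + transpose L1 *v fshift_adj v k)"

definition lower_triangular :: "real ^ ('n::{finite,linorder}) ^ ('n::{finite,linorder}) \<Rightarrow> bool" where
  "lower_triangular A \<longleftrightarrow> (\<forall>i j. i < j \<longrightarrow> A $ i $ j = 0)"

definition strictly_lower_triangular :: "real ^ ('n::{finite,linorder}) ^ ('n::{finite,linorder}) \<Rightarrow> bool" where
  "strictly_lower_triangular A \<longleftrightarrow> (\<forall>i j. i \<le> j \<longrightarrow> A $ i $ j = 0)"

end

theory Submission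
  imports Defs
begin

lemma permutes_finlin_le:
  fixes p :: "'a::{finite,linorder} \<Rightarrow> 'a"
  assumes p: "p permutes UNIV" and le: "\<And>i. p i \<le> i"
  shows "p = id"
proof (rule ccontr)
  assume "p \<noteq> id"
  then have ne: "{i. p i \<noteq> i} \<noteq> {}" by (auto simp: fun_eq_iff)
  define m where "m = Min {i. p i \<noteq> i}"
  have mS: "p m \<noteq> m" using Min_in[OF _ ne] m_def by auto
  have lt: "p m < m" using le[of m] mS by auto
  have "p (p m) = p m"
  proof (rule ccontr)
    assume "p (p m) \<noteq> p m"
    then have "m \<le> p m" unfolding m_def by (intro Min_le) auto
    with lt show False by simp
  qed
  with permutes_inj[OF p] have "p m = m" unfolding inj_def by blast
  with mS show False by simp
qed

lemma det_lowertri_lin: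
  fixes A :: "real^('n::{finite,linorder})^('n::{finite,linorder})"
  assumes ld: "\<And>i j. i < j \<Longrightarrow> A$i$j = 0"
  shows "det A = prod (\<lambda>i. A$i$i) (UNIV:: 'n set)"
proof -
  let ?U = "UNIV:: 'n set"
  let ?PU = "{p. p permutes ?U}"
  let ?pp = "\<lambda>p. of_int (sign p) * prod (\<lambda>i. A$i$p i) (UNIV :: 'n set)"
  have fU: "finite ?U"
    by simp
  have id0: "{id} \<subseteq> ?PU"
    by (auto simp: permutes_id)
  have p0: "\<forall>p \<in> ?PU - {id}. ?pp p = 0"
  proof
    fix p
    assume "p \<in> ?PU - {id}"
    then obtain i where i: "p i > i"
      by clarify (meson leI permutes_finlin_le)
    from ld[OF i] have "\<exists>i \<in> ?U. A$i$p i = 0"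
      by blast
    with prod_zero[OF fU] show "?pp p = 0"
      by force
  qed
  from sum.mono_neutral_cong_left[OF finite_permutations[OF fU] id0 p0] show ?thesis
    unfolding det_def by (simp add: sign_id)
qed

lemma homog_zero:
  fixes L0 L1 :: "real ^ ('n::{finite,linorder}) ^ ('n::{finite,linorder})"
    and d :: "nat \<Rightarrow> real ^ ('n::{finite,linorder})"
  assumes "lower_triangular L0"
    and "strictly_lower_triangular L1"
    and "invertible L0"
    and h: "\<And>k. L0 *v d k + L1 *v d (Suc k) = 0"
  shows "d k = 0"
proof (rule ccontr)
  assume "d k \<noteq> 0"
  then obtain i0 where "d k $ i0 \<noteq> 0" by (auto simp: vec_eq_iff)
  then have ne: "{i. \<exists>k. d k $ i \<noteq> 0} \<noteq> {}" by auto
  define m where "m = Min {i. \<exists>k. d k $ i \<noteq> 0}"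
  have "m \<in> {i. \<exists>k. d k $ i \<noteq> 0}" using Min_in[OF _ ne] m_def by auto
  then obtain k1 where k1: "d k1 $ m \<noteq> 0" by auto
  have below: "d k' $ j = 0" if "j < m" for j k'
  proof (rule ccontr)
    assume "d k' $ j \<noteq> 0"
    then have "m \<le> j" unfolding m_def by (intro Min_le) auto
    with that show False by simp
  qed
  have diag: "L0 $ m $ m \<noteq> 0"
  proof -
    have "det L0 \<noteq> 0" using assms(3) invertible_det_nz by blast
    moreover have "det L0 = prod (\<lambda>i. L0$i$i) UNIV"
      by (rule det_lowertri_lin) (use assms(1) in \<open>auto simp: lower_triangular_def\<close>)
    ultimately show ?thesis by auto
  qed
  have e1: "(L0 *v d k1) $ m = L0 $ m $ m * d k1 $ m"
  proof -
    have "(L0 *v d k1) $ m = (\<Sum>j\<in>UNIV. L0 $ m $ j * d k1 $ j)"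
      by (simp add: matrix_vector_mult_def)
    also have "\<dots> = (\<Sum>j\<in>UNIV. if j = m then L0 $ m $ m * d k1 $ m else 0)"
    proof (rule sum.cong)
      fix j :: 'n
      show "L0 $ m $ j * d k1 $ j = (if j = m then L0 $ m $ m * d k1 $ m else 0)"
        using assms(1) below[of j k1] unfolding lower_triangular_def
        by (cases "j < m"; cases "m < j") auto
    qed simp
    finally show ?thesis by simp
  qed
  have e2: "(L1 *v d (Suc k1)) $ m = 0"
  proof -
    have "(L1 *v d (Suc k1)) $ m = (\<Sum>j\<in>UNIV. L1 $ m $ j * d (Suc k1) $ j)"
      by (simp add: matrix_vector_mult_def)
    also have "\<dots> = 0"
    proof (rule sum.neutral, rule ballI)
      fix j :: 'n
      show "L1 $ m $ j * d (Suc k1) $ j = 0"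
        using assms(2) below[of j "Suc k1"] unfolding strictly_lower_triangular_def
        by (cases "j < m") auto
    qed
    finally show ?thesis by simp
  qed
  have "(L0 *v d k1 + L1 *v d (Suc k1)) $ m = 0" using h[of k1] by simp
  then have "L0 $ m $ m * d k1 $ m = 0" using e1 e2 by simp
  with diag k1 show False by simp
qed

theorem lemma3:
  fixes L0 L1 :: "real ^ ('n::{finite,linorder}) ^ ('n::{finite,linorder})"
    and K2 :: "real ^ ('p::finite) ^ ('n::{finite,linorder})"
    and x0 :: "real ^ ('p::finite)"
    and r :: real
    and z :: "nat \<Rightarrow> real ^ ('n::{finite,linorder})"
  assumes "lower_triangular L0"
    and "strictly_lower_triangular L1"
    and "invertible L0"
    and "0 < r" and "r < 1"
    and "ell2 z"
    and "Lop L0 L1 (Lop_adj L0 L1 z) = (\<lambda>k. (r ^ k) *\<^sub>R (K2 *v x0))"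
  shows "((L0 + r *\<^sub>R L1) ** transpose L0) *v z 0 = K2 *v x0"
proof -
  define w where "w = Lop_adj L0 L1 z"
  define c where "c = K2 *v x0"
  have eq: "L0 *v w k + L1 *v w (Suc k) = (r ^ k) *\<^sub>R c" for k
    using fun_cong[OF assms(7), of k] unfolding w_def[symmetric] c_def[symmetric]
    by (simp add: Lop_def fshift_def)
  define d where "d k = w (Suc k) - r *\<^sub>R w k" for k
  have hd: "L0 *v d k + L1 *v d (Suc k) = 0" for k
  proof -
    have "L0 *v d k + L1 *v d (Suc k) =
      (L0 *v w (Suc k) + L1 *v w (Suc (Suc k))) - r *\<^sub>R (L0 *v w k + L1 *v w (Suc k))"
      by (simp add: d_def algebra_simps)
    also have "\<dots> = 0" by (simp add: eq)
    finally show ?thesis .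
  qed
  have "d 0 = 0" using homog_zero[OF assms(1-3), of d 0] hd by blast
  then have w1: "w 1 = r *\<^sub>R w 0" by (simp add: d_def)
  have w0: "w 0 = transpose L0 *v z 0"
    by (simp add: w_def Lop_adj_def fshift_adj_def)
  have "((L0 + r *\<^sub>R L1) ** transpose L0) *v z 0 = (L0 + r *\<^sub>R L1) *v w 0"
    by (simp only: w0 matrix_vector_mul_assoc)
  also have "\<dots> = L0 *v w 0 + L1 *v w 1"
    by (simp add: w1[simplified] matrix_vector_mult_add_rdistrib scaleR_matrix_vector_assoc[symmetric]
        matrix_vector_mult_scaleR)
  also have "\<dots> = c" using eq[of 0] by simp
  finally show ?thesis by (simp add: c_def)
qed

end
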